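(* Let $\mu, z \in \mathcal{X}$ and let $P_X$ be a probability distribution on $\mathcal{X}$. The influence function $IF(z; D, \mu, P_X) := \lim_{\varepsilon \downarrow 0} \frac{D(\mu; (1 - \varepsilon) P_X + \varepsilon \delta_z) - D(\mu; P_X)}{\varepsilon}$ exists and equals $IF(z; D, \mu, P_X) = 2 - 2 D(\mu; P_X) - \mathrm{E} \{ h(X, z, \mu) \}$, where $X \sim P_X$. Moreover, $\sup_{z \in \mathcal{X}} | IF(z; D, \mu, P_X) | \leq 4$.
   Context: $(\mathcal{X}, d)$ is a complete separable metric space with its Borel $\sigma$-algebra. Define $h: \mathcal{X}^3 \to \mathbb{R}$ by $h(x_1, x_2, x_3) := \mathbb{I}( x_3 \notin \{x_1, x_2\} ) \dfrac{ d^2(x_1, x_3) + d^2(x_2, x_3) - d^2(x_1, x_2) }{d(x_1, x_3)\, d(x_2, x_3) }$, where $h := 0$ when $x_3 \in \{x_1,x_2\}$. The metric spatial depth of $\mu \in \mathcal{X}$ with respect to a probability distribution $P_X$ on $\mathcal{X}$ is $D(\mu; P_X) := 1 - \frac{1}{2} \mathrm{E} \{ h(X_1, X_2, \mu) \}$, where $X_1, X_2 \sim P_X$ are independent. $\delta_z$ denotes the Dirac point mass at $z$, and $(1-\varepsilon)P_X + \varepsilon\delta_z$ the corresponding mixture distribution. *)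

theory Defs
  imports "HOL-Probability.Probability"
begin

definition msd_h :: "'a::metric_space \<Rightarrow> 'a \<Rightarrow> 'a \<Rightarrow> real" where
  "msd_h x1 x2 x3 =
     (if x3 \<notin> {x1, x2}
      then (dist x1 x3 ^ 2 + dist x2 x3 ^ 2 - dist x1 x2 ^ 2) / (dist x1 x3 * dist x2 x3)
      else 0)"

definition msd_depth :: "'a::metric_space \<Rightarrow> 'a measure \<Rightarrow> real" where
  "msd_depth \<mu> P = 1 - (1/2) * (\<integral>p. msd_h (fst p) (snd p) \<mu> \<partial>(P \<Otimes>\<^sub>M P))"

definition mixture :: "real \<Rightarrow> 'a::topological_space measure \<Rightarrow> 'a \<Rightarrow> 'a measure" where
  "mixture \<epsilon> P z = measure_of UNIV (sets borel)
     (\<lambda>A. ennreal (1 - \<epsilon>) * emeasure P A + ennreal \<epsilon> * indicator A z)"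

end

theory Submission
  imports Defs
begin


definition mixB :: "real \<Rightarrow> 'a::topological_space measure \<Rightarrow> 'a \<Rightarrow> 'a measure" where
  "mixB e P z = measure_pmf (bernoulli_pmf e) \<bind> (\<lambda>b. if b then return borel z else P)"

lemma mixB_meas:
  assumes "prob_space P" "sets P = sets borel"
  shows "(\<lambda>b. if b then return borel z else P) \<in> measurable (measure_pmf (bernoulli_pmf e)) (subprob_algebra borel)"
  using assms by (auto simp: space_subprob_algebra prob_space_imp_subprob_space subprob_space_return)

lemma sets_mixB: assumes "prob_space P" "sets P = sets borel"
  shows "sets (mixB e P z) = sets borel"
  unfolding mixB_def by (rule sets_bind[OF _ ]) (use assms in \<open>auto\<close>)

lemma nn_bern: assumes "0 \<le> e" "e \<le> 1"
  shows "(\<integral>\<^sup>+b. f b \<partial>measure_pmf (bernoulli_pmf e)) = f True * ennreal e + f False * ennreal (1 - e)"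
  using assms by (subst nn_integral_measure_pmf_support[where A=UNIV]) (auto simp: UNIV_bool)

lemma emeasure_mixB: assumes "prob_space P" "sets P = sets borel" "0 \<le> e" "e \<le> 1" "A \<in> sets borel"
  shows "emeasure (mixB e P z) A = ennreal (1 - e) * emeasure P A + ennreal e * indicator A z"
  unfolding mixB_def
  apply (subst emeasure_bind[OF _ mixB_meas[OF assms(1,2)] assms(5)])
  using assms by (auto simp: nn_bern mult.commute add.commute)

lemma mixture_eq: assumes "prob_space P" "sets P = sets borel" "0 \<le> e" "e \<le> 1"
  shows "mixture e P z = mixB e P z"
proof -
  have "mixture e P z = measure_of UNIV (sets borel) (emeasure (mixB e P z))"
    unfolding mixture_def
    by (rule measure_of_eq) (use assms emeasure_mixB[symmetric] in \<open>auto simp: sets.sigma_sets_eq[of borel, simplified]\<close>)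
  also have "\<dots> = mixB e P z"
    using measure_of_of_measure[of "mixB e P z"] sets_mixB[OF assms(1,2)]
    by (metis sets_eq_imp_space_eq space_borel)
  finally show ?thesis .
qed

lemma prob_mixB: assumes "prob_space P" "sets P = sets borel"
  shows "prob_space (mixB e P z)"
  unfolding mixB_def
  by (rule prob_space.prob_space_bind[OF prob_space_measure_pmf _ mixB_meas[OF assms]])
     (use assms in \<open>auto simp: prob_space_return\<close>)

lemma int_bounded_P:
  fixes f :: "'a::topological_space \<Rightarrow> real"
  assumes "prob_space P" "sets P = sets borel" "f \<in> borel_measurable borel" "\<And>x. \<bar>f x\<bar> \<le> K"
  shows "integrable P f"
proof -
  interpret prob_space P by fact
  show ?thesis
    by (rule integrable_const_bound[where B=K]) (use assms measurable_cong_sets in auto)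
qed

lemma int_mixB:
  assumes P: "prob_space P" "sets P = sets borel" and e: "0 \<le> e" "e \<le> 1"
    and f: "f \<in> borel_measurable borel" and K: "\<And>x. \<bar>f x\<bar> \<le> K"
  shows "integral\<^sup>L (mixB e P z) f = (1 - e) * integral\<^sup>L P f + e * f z"
proof -
  define g where "g x = f x + K" for x
  have g0: "0 \<le> g x" for x using K[of x] by (simp add: g_def)
  have gm: "g \<in> borel_measurable borel" using f unfolding g_def by measurable
  have M: "prob_space (mixB e P z)" by (rule prob_mixB[OF P])
  have sM: "sets (mixB e P z) = sets borel" by (rule sets_mixB[OF P])
  have gb: "\<bar>g x\<bar> \<le> 2 * K" for x using K[of x] by (simp add: g_def abs_le_iff)
  have iP: "integrable P g" by (rule int_bounded_P[OF P gm gb])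
  have "(\<integral>\<^sup>+x. ennreal (g x) \<partial>mixB e P z) = ennreal (g z) * ennreal e + (\<integral>\<^sup>+x. ennreal (g x) \<partial>P) * ennreal (1 - e)"
    unfolding mixB_def
    by (subst nn_integral_bind[OF _ mixB_meas[OF P]]) (use gm e P in \<open>auto simp: nn_bern nn_integral_return\<close>)
  also have "(\<integral>\<^sup>+x. ennreal (g x) \<partial>P) = ennreal (integral\<^sup>L P g)"
    by (rule nn_integral_eq_integral[OF iP]) (simp add: g0)
  also have "ennreal (g z) * ennreal e + ennreal (integral\<^sup>L P g) * ennreal (1 - e)
     = ennreal (g z * e + integral\<^sup>L P g * (1 - e))"
    using e g0 integral_nonneg_AE[of g P] by (simp add: ennreal_mult ennreal_plus g0)
  finally have nn: "(\<integral>\<^sup>+x. ennreal (g x) \<partial>mixB e P z) = ennreal (g z * e + integral\<^sup>L P g * (1 - e))" .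
  have gm': "g \<in> borel_measurable (mixB e P z)" by (subst measurable_cong_sets[OF sM refl]) (rule gm)
  have "integral\<^sup>L (mixB e P z) g = enn2real (\<integral>\<^sup>+x. ennreal (g x) \<partial>mixB e P z)"
    by (rule integral_eq_nn_integral[OF gm']) (simp add: g0)
  also have "\<dots> = g z * e + integral\<^sup>L P g * (1 - e)"
    unfolding nn using g0 e integral_nonneg_AE[of g P] by (intro enn2real_ennreal) simp
  finally have "integral\<^sup>L (mixB e P z) g = g z * e + integral\<^sup>L P g * (1 - e)" .
  moreover have "integral\<^sup>L (mixB e P z) g = integral\<^sup>L (mixB e P z) f + K"
  proof -
    interpret prob_space "mixB e P z" by (rule M)
    have "integrable (mixB e P z) f"
      by (rule integrable_const_bound[where B=K]) (use K f in \<open>auto simp: measurable_cong_sets[OF sM refl]\<close>)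
    then show ?thesis unfolding g_def by (simp add: prob_space)
  qed
  moreover have "integral\<^sup>L P g = integral\<^sup>L P f + K"
  proof -
    interpret prob_space P by (rule P)
    have "integrable P f" by (rule int_bounded_P[OF P f K])
    then show ?thesis unfolding g_def by (simp add: prob_space)
  qed
  ultimately show ?thesis by (simp add: g_def algebra_simps)
qed



lemma h_sym: "msd_h x y m = msd_h y x m"
  unfolding msd_h_def by (simp add: dist_commute insert_commute mult.commute add.commute)

lemma h_bound: "\<bar>msd_h x y m\<bar> \<le> 2"
proof (cases "m \<notin> {x, y}")
  case True
  define a where "a = dist x m"
  define b where "b = dist y m"
  define c where "c = dist x y"
  have a: "a > 0" "b > 0" using True by (auto simp: a_def b_def)
  have t1: "c \<le> a + b" unfolding a_def b_def c_def by (metis dist_commute dist_triangle)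
  have t2: "a \<le> c + b" unfolding a_def b_def c_def by (metis dist_triangle)
  have t3: "b \<le> c + a" unfolding a_def b_def c_def by (metis dist_commute dist_triangle)
  have c0: "c \<ge> 0" by (simp add: c_def)
  have "a^2 + b^2 - c^2 \<le> 2 * (a * b)"
  proof -
    have "\<bar>a - b\<bar> \<le> \<bar>c\<bar>" using t2 t3 c0 by auto
    then have "(a - b)^2 \<le> c^2" using abs_le_square_iff by blast
    then show ?thesis by (simp add: power2_eq_square algebra_simps)
  qed
  moreover have "- (2 * (a * b)) \<le> a^2 + b^2 - c^2"
  proof -
    have "c^2 \<le> (a + b)^2" using t1 c0 by (intro power_mono) auto
    then show ?thesis by (simp add: power2_eq_square algebra_simps)
  qed
  ultimately have "\<bar>(a^2 + b^2 - c^2) / (a * b)\<bar> \<le> 2"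
    using a by (simp add: abs_le_iff divide_le_eq le_divide_eq)
  then show ?thesis using True unfolding msd_h_def a_def b_def c_def by simp
qed (simp add: msd_h_def)

lemma h_meas[measurable]:
  fixes m :: "'a::{metric_space, second_countable_topology}"
  assumes [measurable]: "f \<in> borel_measurable M" "g \<in> borel_measurable M"
  shows "(\<lambda>p. msd_h (f p) (g p) m) \<in> borel_measurable M"
  unfolding msd_h_def insert_iff empty_iff by measurable



lemma fub:
  fixes m :: "'a::polish_space"
  assumes M: "prob_space M" "sets M = sets borel"
  shows "integral\<^sup>L (M \<Otimes>\<^sub>M M) (\<lambda>p. msd_h (fst p) (snd p) m) = (\<integral>x. \<integral>y. msd_h x y m \<partial>M \<partial>M)"
proof -
  interpret M: prob_space M by (rule M(1))
  interpret pair_prob_space M M ..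
  interpret P: prob_space "M \<Otimes>\<^sub>M M" by (rule prob_space_pair) (rule M(1))+
  have f1: "fst \<in> borel_measurable (M \<Otimes>\<^sub>M M)"
    using measurable_fst[of M M] by (simp add: measurable_cong_sets[OF refl M(2)])
  have f2: "snd \<in> borel_measurable (M \<Otimes>\<^sub>M M)"
    using measurable_snd[of M M] by (simp add: measurable_cong_sets[OF refl M(2)])
  have meas: "(\<lambda>p. msd_h (fst p) (snd p) m) \<in> borel_measurable (M \<Otimes>\<^sub>M M)"
    using f1 f2 by measurable
  have int: "integrable (M \<Otimes>\<^sub>M M) (\<lambda>p. msd_h (fst p) (snd p) m)"
    by (rule P.integrable_const_bound[where B=2]) (use meas h_bound in auto)
  show ?thesis using integral_fst'[OF int] by simp
qed

lemma A_props:
  fixes m :: "'a::polish_space"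
  assumes P: "prob_space P" "sets P = sets borel"
  shows "(\<lambda>x. \<integral>y. msd_h x y m \<partial>P) \<in> borel_measurable borel"
    and "\<bar>\<integral>y. msd_h x y m \<partial>P\<bar> \<le> 2"
proof -
  interpret prob_space P by (rule P(1))
  have m1: "(\<lambda>p. msd_h (fst p) (snd p) m) \<in> borel_measurable (borel \<Otimes>\<^sub>M P)"
  proof -
    have "snd \<in> borel_measurable (borel \<Otimes>\<^sub>M P)"
      using measurable_snd[of borel P] by (simp add: measurable_cong_sets[OF refl P(2)])
    then show ?thesis by measurable
  qed
  show "(\<lambda>x. \<integral>y. msd_h x y m \<partial>P) \<in> borel_measurable borel"
  proof (rule borel_measurable_lebesgue_integral)
    show "(\<lambda>(x, y). msd_h x y m) \<in> borel_measurable (borel \<Otimes>\<^sub>M P)"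
      using m1 by (simp add: case_prod_beta')
  qed
  have hm: "(\<lambda>y. msd_h x y m) \<in> borel_measurable P"
    by (subst measurable_cong_sets[OF P(2) refl]) simp
  have i: "integrable P (\<lambda>y. msd_h x y m)"
    by (rule integrable_const_bound[where B=2]) (use hm h_bound in auto)
  have lb: "-2 \<le> msd_h x y m" for y using h_bound[of x y m] by linarith
  have "(\<integral>y. msd_h x y m \<partial>P) \<le> 2"
    by (rule integral_le_const[OF i]) (intro AE_I2, use h_bound[of x _ m] in \<open>simp add: abs_le_iff\<close>)
  moreover have "-2 \<le> (\<integral>y. msd_h x y m \<partial>P)"
    by (rule integral_ge_const[OF i], rule AE_I2, rule lb)
  ultimately show "\<bar>\<integral>y. msd_h x y m \<partial>P\<bar> \<le> 2" by auto
qed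

lemma comb_bound:
  fixes a b e :: real
  assumes "\<bar>a\<bar> \<le> 2" "\<bar>b\<bar> \<le> 2" "0 \<le> e" "e \<le> 1"
  shows "\<bar>(1 - e) * a + e * b\<bar> \<le> 2"
proof -
  have "\<bar>(1 - e) * a + e * b\<bar> \<le> (1 - e) * \<bar>a\<bar> + e * \<bar>b\<bar>"
    using assms by (metis abs_mult abs_of_nonneg abs_triangle_ineq diff_ge_0_iff_ge)
  also have "\<dots> \<le> (1 - e) * 2 + e * 2"
    using assms by (intro add_mono mult_left_mono) auto
  finally show ?thesis by simp
qed

lemma depth_mix:
  fixes m z :: "'a::polish_space"
  assumes P: "prob_space P" "sets P = sets borel" and e: "0 \<le> e" "e \<le> 1"
  shows "msd_depth m (mixture e P z) = 1 - 1/2 * ((1-e)*((1-e)*(\<integral>x. \<integral>y. msd_h x y m \<partial>P \<partial>P)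
     + e*(\<integral>x. msd_h x z m \<partial>P)) + e*((1-e)*(\<integral>x. msd_h x z m \<partial>P) + e*msd_h z z m))"
proof -
  define A where "A x = (\<integral>y. msd_h x y m \<partial>P)" for x
  define I where "I = (\<integral>x. A x \<partial>P)"
  define J where "J = (\<integral>x. msd_h x z m \<partial>P)"
  have Am: "A \<in> borel_measurable borel" unfolding A_def by (rule A_props(1)[OF P])
  have Ab: "\<bar>A x\<bar> \<le> 2" for x unfolding A_def by (rule A_props(2)[OF P])
  have Mp: "prob_space (mixB e P z)" by (rule prob_mixB[OF P])
  have sM: "sets (mixB e P z) = sets borel" by (rule sets_mixB[OF P])
  have "msd_depth m (mixture e P z) = 1 - 1/2 * (\<integral>x. \<integral>y. msd_h x y m \<partial>mixB e P z \<partial>mixB e P z)"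
    unfolding msd_depth_def mixture_eq[OF P e] fub[OF Mp sM] ..
  also have "(\<integral>x. \<integral>y. msd_h x y m \<partial>mixB e P z \<partial>mixB e P z)
      = (\<integral>x. (1 - e) * A x + e * msd_h x z m \<partial>mixB e P z)"
    by (rule Bochner_Integration.integral_cong[OF refl], subst int_mixB[OF P e, of _ 2])
       (auto simp: h_bound A_def)
  also have "\<dots> = (1 - e) * (\<integral>x. (1 - e) * A x + e * msd_h x z m \<partial>P) + e * ((1 - e) * A z + e * msd_h z z m)"
    by (rule int_mixB[OF P e, of _ 2]) (use Am in \<open>auto intro!: comb_bound simp: Ab h_bound e\<close>)
  also have "(\<integral>x. (1 - e) * A x + e * msd_h x z m \<partial>P) = (1 - e) * I + e * J"
  proof -
    have i1: "integrable P A" by (rule int_bounded_P[OF P Am Ab])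
    have i2: "integrable P (\<lambda>x. msd_h x z m)" by (rule int_bounded_P[OF P _ h_bound]) simp
    show ?thesis using i1 i2 unfolding I_def J_def by simp
  qed
  also have "A z = J" unfolding A_def J_def by (simp add: h_sym[of z])
  finally show ?thesis unfolding I_def A_def J_def .
qed



lemma int_le2:
  fixes f :: "'a::topological_space \<Rightarrow> real"
  assumes P: "prob_space P" "sets P = sets borel" and f: "f \<in> borel_measurable borel" "\<And>x. \<bar>f x\<bar> \<le> 2"
  shows "\<bar>integral\<^sup>L P f\<bar> \<le> 2"
proof -
  interpret prob_space P by (rule P(1))
  have i: "integrable P f" by (rule int_bounded_P[OF P f])
  have lb: "-2 \<le> f y" "f y \<le> 2" for y using f(2)[of y] by linarith+
  have "integral\<^sup>L P f \<le> 2" by (rule integral_le_const[OF i], rule AE_I2, rule lb)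
  moreover have "-2 \<le> integral\<^sup>L P f" by (rule integral_ge_const[OF i], rule AE_I2, rule lb)
  ultimately show ?thesis by auto
qed

theorem theorem2:
  fixes \<mu> z :: "'a::polish_space" and P :: "'a measure"
  assumes "prob_space P" and "sets P = sets borel"
  shows "((\<lambda>\<epsilon>. (msd_depth \<mu> (mixture \<epsilon> P z) - msd_depth \<mu> P) / \<epsilon>)
            \<longlongrightarrow> 2 - 2 * msd_depth \<mu> P - (\<integral>x. msd_h x z \<mu> \<partial>P)) (at_right 0) \<and>
         (\<forall>z'. \<bar>2 - 2 * msd_depth \<mu> P - (\<integral>x. msd_h x z' \<mu> \<partial>P)\<bar> \<le> 4)"
proof -
  note P = assms
  define I where "I = (\<integral>x. \<integral>y. msd_h x y \<mu> \<partial>P \<partial>P)"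
  define J where "J = (\<integral>x. msd_h x z \<mu> \<partial>P)"
  define c where "c = msd_h z z \<mu>"
  have DP: "msd_depth \<mu> P = 1 - 1/2 * I"
    unfolding msd_depth_def fub[OF P] I_def ..
  have Ib: "\<bar>I\<bar> \<le> 2" unfolding I_def
    by (rule int_le2[OF P A_props(1)[OF P] A_props(2)[OF P]])
  have ev: "\<forall>\<^sub>F \<epsilon> in at_right 0. -1/2*((\<epsilon>-2)*I + 2*(1-\<epsilon>)*J + \<epsilon>*c)
      = (msd_depth \<mu> (mixture \<epsilon> P z) - msd_depth \<mu> P) / \<epsilon>"
    unfolding eventually_at_right[OF zero_less_one]
  proof (intro exI[of _ 1] conjI allI impI)
    fix e :: real assume e: "0 < e" "e < 1"
    show "-1/2*((e-2)*I + 2*(1-e)*J + e*c) = (msd_depth \<mu> (mixture e P z) - msd_depth \<mu> P) / e"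
    proof -
      have dm: "msd_depth \<mu> (mixture e P z) = 1 - 1/2*((1-e)*((1-e)*I + e*J) + e*((1-e)*J + e*c))"
        using depth_mix[OF P, of e \<mu> z] e unfolding I_def J_def c_def by simp
      show ?thesis unfolding dm DP using e by (simp add: field_simps)
    qed
  qed simp
  have lim: "((\<lambda>\<epsilon>. -1/2*((\<epsilon>-2)*I + 2*(1-\<epsilon>)*J + \<epsilon>*c)) \<longlongrightarrow> -1/2*((0-2)*I + 2*(1-0)*J + 0*c)) (at_right 0)"
    by (intro tendsto_intros)
  have "((\<lambda>\<epsilon>. (msd_depth \<mu> (mixture \<epsilon> P z) - msd_depth \<mu> P) / \<epsilon>) \<longlongrightarrow> I - J) (at_right 0)"
    using tendsto_cong[OF ev] lim by (simp add: algebra_simps)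
  moreover have "\<bar>2 - 2 * msd_depth \<mu> P - (\<integral>x. msd_h x z' \<mu> \<partial>P)\<bar> \<le> 4" for z'
  proof -
    have "\<bar>\<integral>x. msd_h x z' \<mu> \<partial>P\<bar> \<le> 2"
      by (rule int_le2[OF P _ h_bound]) simp
    then show ?thesis using Ib by (simp add: DP)
  qed
  ultimately show ?thesis by (simp add: DP J_def)
qed

end
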